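(* Let $N\ge1$ and let $Z_1,\dots,Z_{2N+1}$ be i.i.d. $N(0,1)$. Set $\widehat Z:=\frac1{\sqrt{N+1}}\sum_{i=1}^{N+1}Z_{N+i}$, $\check{\mathcal Z}:=\frac1{\sqrt N}\sum_{i=1}^NZ_i$, $\widetilde{\mathcal Z}:=\frac1{\sqrt N}\sum_{i=1}^N\frac{Z_i^2-1}{\sqrt2}$ and $\Delta:=(\widehat Z,\check{\mathcal Z},\widetilde{\mathcal Z})^{\prime}$. Then for any $w=(w_1,w_2,w_3)\in\mathbb R^3$, $$\Big|\mathbb E\big(e^{iw^{\prime}\Delta}\big)-e^{-\|w\|^2/2}\Big|\le\epsilon(w)\,e^{-\|w\|^2/2},$$ where $$\epsilon(w):=|w_3|\sqrt{\tfrac2N}\Big(\tfrac{w_2^2}2+w_3^2\Big)\exp\Big(|w_3|\sqrt{\tfrac2N}\Big(\tfrac{w_2^2}2+w_3^2\Big)\Big).$$ *)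

theory Defs
  imports "HOL-Probability.Probability"
begin

definition Zhat :: "nat \<Rightarrow> (nat \<Rightarrow> 'a \<Rightarrow> real) \<Rightarrow> 'a \<Rightarrow> real" where
  "Zhat N Z x = (\<Sum>i=1..N+1. Z (N+i) x) / sqrt (real N + 1)"

definition Zcheck :: "nat \<Rightarrow> (nat \<Rightarrow> 'a \<Rightarrow> real) \<Rightarrow> 'a \<Rightarrow> real" where
  "Zcheck N Z x = (\<Sum>i=1..N. Z i x) / sqrt (real N)"

definition Ztilde :: "nat \<Rightarrow> (nat \<Rightarrow> 'a \<Rightarrow> real) \<Rightarrow> 'a \<Rightarrow> real" where
  "Ztilde N Z x = (\<Sum>i=1..N. ((Z i x)^2 - 1) / sqrt 2) / sqrt (real N)"

definition eps_bound :: "nat \<Rightarrow> real \<Rightarrow> real \<Rightarrow> real \<Rightarrow> real" where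
  "eps_bound N w1 w2 w3 =
     (let a = \<bar>w3\<bar> * sqrt (2 / real N) * (w2^2 / 2 + w3^2) in a * exp a)"

end

theory Submission
  imports Defs "HOL-Real_Asymp.Real_Asymp"
begin



definition gq :: "real \<Rightarrow> real \<Rightarrow> real \<Rightarrow> complex" where
  "gq a c x = exp (\<i> * complex_of_real (c * x^2 + a * x))"

definition Ex :: "real \<Rightarrow> real \<Rightarrow> nat \<Rightarrow> complex" where
  "Ex a c k = (\<integral>x. complex_of_real (std_normal_density x) * (complex_of_real x ^ k * gq a c x) \<partial>lborel)"

lemma norm_gq[simp]: "norm (gq a c x) = 1"
  unfolding gq_def by simp

lemma continuous_gq: "continuous_on UNIV (gq a c)"
  unfolding gq_def by (intro continuous_intros)

lemma meas_gq[measurable]: "gq a c \<in> borel_measurable borel"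
  by (rule borel_measurable_continuous_onI[OF continuous_gq])

lemma int_mom:
  "integrable lborel (\<lambda>x. complex_of_real (std_normal_density x) * (complex_of_real x ^ k * gq a c x))"
proof (rule Bochner_Integration.integrable_bound[OF integrable_std_normal_moment_abs[of k]])
  show "(\<lambda>x. complex_of_real (std_normal_density x) * (complex_of_real x ^ k * gq a c x)) \<in> borel_measurable lborel"
    by measurable
  show "AE x in lborel. norm (complex_of_real (std_normal_density x) * (complex_of_real x ^ k * gq a c x))
     \<le> norm (std_normal_density x * \<bar>x\<bar> ^ k)"
    by (auto simp: norm_mult norm_power)
qed

lemma int_mom0: "integrable lborel (\<lambda>x. complex_of_real (std_normal_density x) * gq a c x)"
  using int_mom[of 0] by simp
lemma int_mom1: "integrable lborel (\<lambda>x. complex_of_real (std_normal_density x) * (complex_of_real x * gq a c x))"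
  using int_mom[of 1] by simp
lemma int_mom2: "integrable lborel (\<lambda>x. complex_of_real (std_normal_density x) * ((complex_of_real x)\<^sup>2 * gq a c x))"
  using int_mom[of 2] by simp

lemma gq_add: "gq a (c + h) x = gq a c x * exp (\<i> * complex_of_real (h * x^2))"
  unfolding gq_def by (simp add: exp_add[symmetric] algebra_simps)

lemma dA: "((\<lambda>c. Ex a c 0) has_vector_derivative (\<i> * Ex a c 2)) (at c)"
proof -
  define Q where "Q = (\<integral>x. std_normal_density x * x ^ 4 \<partial>lborel) / 2"
  have intQ: "integrable lborel (\<lambda>x. std_normal_density x * x ^ 4)"
    by (rule integrable_std_normal_moment)
  have bnd: "norm (Ex a (c + h) 0 - Ex a c 0 - h *\<^sub>R (\<i> * Ex a c 2)) \<le> h^2 * Q" for h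
  proof -
    let ?f = "\<lambda>x. complex_of_real (std_normal_density x) *
        (gq a c x * (exp (\<i> * complex_of_real (h * x^2)) - 1 - \<i> * complex_of_real (h * x^2)))"
    have eq: "Ex a (c + h) 0 - Ex a c 0 - h *\<^sub>R (\<i> * Ex a c 2) = (\<integral>x. ?f x \<partial>lborel)"
    proof -
      have "Ex a (c + h) 0 - Ex a c 0 - h *\<^sub>R (\<i> * Ex a c 2) =
        (\<integral>x. complex_of_real (std_normal_density x) * (complex_of_real x ^ 0 * gq a (c+h) x)
            - complex_of_real (std_normal_density x) * (complex_of_real x ^ 0 * gq a c x)
            - (complex_of_real h * \<i>) * (complex_of_real (std_normal_density x) * (complex_of_real x ^ 2 * gq a c x)) \<partial>lborel)"
        unfolding Ex_def
        by (subst Bochner_Integration.integral_diff, (intro Bochner_Integration.integrable_diff int_mom integrable_mult_right)+)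
           (subst Bochner_Integration.integral_diff, (intro int_mom)+, simp add: scaleR_conv_of_real mult.assoc)
      also have "\<dots> = (\<integral>x. ?f x \<partial>lborel)"
        by (intro Bochner_Integration.integral_cong refl) (simp add: gq_add algebra_simps)
      finally show ?thesis .
    qed
    have nf: "norm (?f x) \<le> h^2 / 2 * (std_normal_density x * x ^ 4)" for x
    proof -
      have e4: "h * x\<^sup>2 * (h * x\<^sup>2) = h^2 * x^4" by algebra
      have "cmod (exp (\<i> * complex_of_real (h * x^2)) - (\<Sum>k \<le> 1. (\<i> * complex_of_real (h * x^2))^k / fact k))
          \<le> \<bar>h * x^2\<bar>^(Suc 1) / fact (Suc 1)"
        by (rule iexp_approx1)
      then have le: "cmod (exp (\<i> * complex_of_real (h * x^2)) - 1 - \<i> * complex_of_real (h * x^2)) \<le> h^2 * x^4 / 2"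
        using e4 by (simp add: power_mult_distrib power2_abs diff_diff_eq power_even_abs flip: power_mult)
      have m: "std_normal_density x * cmod (exp (\<i> * complex_of_real (h * x^2)) - 1 - \<i> * complex_of_real (h * x^2))
          \<le> std_normal_density x * (h^2 * x^4 / 2)"
        by (rule mult_left_mono[OF le]) simp
      have "norm (?f x) = std_normal_density x *
          cmod (exp (\<i> * complex_of_real (h * x^2)) - 1 - \<i> * complex_of_real (h * x^2))"
        by (simp add: norm_mult)
      also have "\<dots> \<le> std_normal_density x * (h^2 * x^4 / 2)" by (rule m)
      also have "\<dots> = h^2 / 2 * (std_normal_density x * x ^ 4)" by simp
      finally show ?thesis .
    qed
    have "norm (\<integral>x. ?f x \<partial>lborel) \<le> (\<integral>x. norm (?f x) \<partial>lborel)"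
      by (rule integral_norm_bound)
    also have "\<dots> \<le> (\<integral>x. h^2 / 2 * (std_normal_density x * x ^ 4) \<partial>lborel)"
    proof (rule integral_mono)
      show "integrable lborel (\<lambda>x. norm (?f x))"
      proof (rule integrable_norm, rule Bochner_Integration.integrable_bound[OF integrable_mult_right[OF intQ, of "h^2/2"]])
        show "?f \<in> borel_measurable lborel" by measurable
        show "AE x in lborel. norm (?f x) \<le> norm (h^2/2 * (std_normal_density x * x ^ 4))"
          using nf by (auto intro: order_trans)
      qed
    qed (use intQ nf in auto)
    also have "\<dots> = h^2 * Q" unfolding Q_def by simp
    finally show ?thesis using eq by simp
  qed
  have "(\<lambda>h. norm (Ex a (c + h) 0 - Ex a c 0 - h *\<^sub>R (\<i> * Ex a c 2)) / norm h) \<midarrow>0\<rightarrow> 0"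
  proof (rule Lim_null_comparison)
    show "\<forall>\<^sub>F h in at 0. norm (norm (Ex a (c + h) 0 - Ex a c 0 - h *\<^sub>R (\<i> * Ex a c 2)) / norm h) \<le> \<bar>h\<bar> * Q"
    proof (rule always_eventually, intro allI)
      fix h :: real
      show "norm (norm (Ex a (c + h) 0 - Ex a c 0 - h *\<^sub>R (\<i> * Ex a c 2)) / norm h) \<le> \<bar>h\<bar> * Q"
      proof (cases "h = 0")
        case False
        have hh: "h^2 = \<bar>h\<bar> * \<bar>h\<bar>" by (simp add: power2_eq_square)
        have "norm (norm (Ex a (c + h) 0 - Ex a c 0 - h *\<^sub>R (\<i> * Ex a c 2)) / norm h)
            = norm (Ex a (c + h) 0 - Ex a c 0 - h *\<^sub>R (\<i> * Ex a c 2)) / \<bar>h\<bar>" by simp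
        also have "\<dots> \<le> h^2 * Q / \<bar>h\<bar>" by (rule divide_right_mono[OF bnd]) simp
        also have "\<dots> = \<bar>h\<bar> * Q" using False by (cases "h > 0") (simp_all add: power2_eq_square field_simps)
        finally show ?thesis .
      qed (simp add: Q_def)
    qed
    show "((\<lambda>h. \<bar>h\<bar> * Q) \<longlongrightarrow> 0) (at 0)"
      by (intro tendsto_eq_intros) auto
  qed
  then show ?thesis
    unfolding has_vector_derivative_def has_derivative_at
    by (auto intro: bounded_linear_scaleR_left)
qed


lemma dphi: "(std_normal_density has_real_derivative (- x * std_normal_density x)) (at x)"
  unfolding std_normal_density_def[abs_def]
  by (auto intro!: derivative_eq_intros simp: field_simps power2_eq_square)

lemma stein:
  fixes h h' :: "real \<Rightarrow> complex"
  assumes D: "\<And>x. (h has_vector_derivative h' x) (at x)"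
   and C: "continuous_on UNIV h'"
   and I1: "integrable lborel (\<lambda>x. complex_of_real (std_normal_density x) * h' x)"
   and I2: "integrable lborel (\<lambda>x. complex_of_real (std_normal_density x) * (complex_of_real x * h x))"
   and LT: "((\<lambda>x. complex_of_real (std_normal_density x) * h x) \<longlongrightarrow> 0) at_top"
   and LB: "((\<lambda>x. complex_of_real (std_normal_density x) * h x) \<longlongrightarrow> 0) at_bot"
  shows "(\<integral>x. complex_of_real (std_normal_density x) * (complex_of_real x * h x) \<partial>lborel)
       = (\<integral>x. complex_of_real (std_normal_density x) * h' x \<partial>lborel)"
proof -
  define F' where "F' x = complex_of_real (std_normal_density x) * h' x
      - complex_of_real (std_normal_density x) * (complex_of_real x * h x)" for x
  have DF: "((\<lambda>x. complex_of_real (std_normal_density x) * h x) has_vector_derivative F' x) (at x)" for x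
  proof -
    have "((\<lambda>x. complex_of_real (std_normal_density x) * h x) has_vector_derivative
        (complex_of_real (std_normal_density x) * h' x + complex_of_real (- x * std_normal_density x) * h x)) (at x)"
      by (intro has_vector_derivative_mult has_vector_derivative_of_real dphi D)
    then show ?thesis unfolding F'_def by (simp add: algebra_simps)
  qed
  have conth: "continuous_on UNIV h"
    using D by (meson continuous_at_imp_continuous_on has_vector_derivative_continuous)
  have contF: "isCont F' x" for x
    unfolding F'_def using C conth
    by (intro continuous_intros) (auto simp: continuous_on_eq_continuous_at std_normal_density_def[abs_def] intro!: continuous_intros)
  have intF: "integrable lborel F'"
    unfolding F'_def using I1 I2 by (rule Bochner_Integration.integrable_diff)
  have "(LBINT x=-\<infinity>..\<infinity>. F' x) = 0 - 0"
  proof (rule interval_integral_FTC_integrable)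
    show "set_integrable lborel (einterval (- \<infinity>) \<infinity>) F'"
      using intF by (simp add: set_integrable_def)
    show "(((\<lambda>x. complex_of_real (std_normal_density x) * h x) \<circ> real_of_ereal) \<longlongrightarrow> 0) (at_right (- \<infinity>))"
      using LB by (simp add: ereal_tendsto_simps1)
    show "(((\<lambda>x. complex_of_real (std_normal_density x) * h x) \<circ> real_of_ereal) \<longlongrightarrow> 0) (at_left \<infinity>)"
      using LT by (simp add: ereal_tendsto_simps1)
  qed (auto intro: DF contF)
  then have "integral\<^sup>L lborel F' = 0"
    by (simp add: interval_lebesgue_integral_def set_lebesgue_integral_def)
  then show ?thesis
    unfolding F'_def using I1 I2 by (simp add: Bochner_Integration.integral_diff)
qed


lemma dgq: "(gq a c has_vector_derivative (\<i> * complex_of_real (2*c*x + a)) * gq a c x) (at x)"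
proof -
  have i: "((\<lambda>x. \<i> * complex_of_real (c * x^2 + a * x)) has_vector_derivative
      (\<i> * complex_of_real (2*c*x + a))) (at x)"
  proof -
    have r: "((\<lambda>x. c*x^2 + a*x) has_real_derivative (2*c*x + a)) (at x)"
      by (auto intro!: derivative_eq_intros)
    show ?thesis
      by (rule has_vector_derivative_mult_right[OF has_vector_derivative_of_real[OF r]])
  qed
  have "((exp \<circ> (\<lambda>x. \<i> * complex_of_real (c * x^2 + a * x))) has_vector_derivative
      (\<i> * complex_of_real (2*c*x + a)) * exp (\<i> * complex_of_real (c * x^2 + a * x))) (at x)"
    by (rule field_vector_diff_chain_at[OF i]) (rule DERIV_exp)
  then show ?thesis unfolding gq_def comp_def by (simp add: o_def)
qed

lemma lim0: "((\<lambda>x. complex_of_real (std_normal_density x) * (complex_of_real x ^ k * gq a c x)) \<longlongrightarrow> 0) F"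
  if "((\<lambda>x. std_normal_density x * \<bar>x\<bar> ^ k) \<longlongrightarrow> 0) F"
  using that by (subst tendsto_norm_zero_iff[symmetric]) (simp add: norm_mult norm_power)

lemma limt0: "((\<lambda>x. std_normal_density x * \<bar>x\<bar> ^ 0) \<longlongrightarrow> 0) at_top"
  unfolding std_normal_density_def by real_asymp
lemma limb0: "((\<lambda>x. std_normal_density x * \<bar>x\<bar> ^ 0) \<longlongrightarrow> 0) at_bot"
  unfolding std_normal_density_def by real_asymp
lemma limt1: "((\<lambda>x. std_normal_density x * \<bar>x\<bar> ^ 1) \<longlongrightarrow> 0) at_top"
  unfolding std_normal_density_def by real_asymp
lemma limb1: "((\<lambda>x. std_normal_density x * \<bar>x\<bar> ^ 1) \<longlongrightarrow> 0) at_bot"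
  unfolding std_normal_density_def by real_asymp

lemma stein1: "Ex a c 1 = 2 * \<i> * c * Ex a c 1 + \<i> * a * Ex a c 0"
proof -
  have "Ex a c 1 = (\<integral>x. complex_of_real (std_normal_density x) * (complex_of_real x * gq a c x) \<partial>lborel)"
    unfolding Ex_def by simp
  also have "\<dots> = (\<integral>x. complex_of_real (std_normal_density x) * ((\<i> * complex_of_real (2*c*x + a)) * gq a c x) \<partial>lborel)"
  proof (rule stein[OF dgq])
    show "continuous_on UNIV (\<lambda>x. \<i> * complex_of_real (2 * c * x + a) * gq a c x)"
      using continuous_gq by (intro continuous_intros) auto
    show "integrable lborel (\<lambda>x. complex_of_real (std_normal_density x) * (complex_of_real x * gq a c x))"
      using int_mom[of 1] by simp
    have "(\<lambda>x. complex_of_real (std_normal_density x) * (\<i> * complex_of_real (2 * c * x + a) * gq a c x))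
       = (\<lambda>x. (2 * \<i> * c) * (complex_of_real (std_normal_density x) * (complex_of_real x ^ 1 * gq a c x))
            + (\<i> * a) * (complex_of_real (std_normal_density x) * (complex_of_real x ^ 0 * gq a c x)))"
      by (auto simp: fun_eq_iff algebra_simps)
    then show "integrable lborel (\<lambda>x. complex_of_real (std_normal_density x) * (\<i> * complex_of_real (2 * c * x + a) * gq a c x))"
      by (simp only:) (intro Bochner_Integration.integrable_add integrable_mult_right int_mom)
    show "((\<lambda>x. complex_of_real (std_normal_density x) * gq a c x) \<longlongrightarrow> 0) at_top"
      using lim0[OF limt0, of a c] by simp
    show "((\<lambda>x. complex_of_real (std_normal_density x) * gq a c x) \<longlongrightarrow> 0) at_bot"
      using lim0[OF limb0, of a c] by simp
  qed
  also have "\<dots> = (\<integral>x. (2 * \<i> * c) * (complex_of_real (std_normal_density x) * (complex_of_real x ^ 1 * gq a c x))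
            + (\<i> * a) * (complex_of_real (std_normal_density x) * (complex_of_real x ^ 0 * gq a c x)) \<partial>lborel)"
    by (intro Bochner_Integration.integral_cong refl) (auto simp: algebra_simps)
  also have "\<dots> = 2 * \<i> * c * Ex a c 1 + \<i> * a * Ex a c 0"
    unfolding Ex_def
    by (simp add: Bochner_Integration.integral_add int_mom0 int_mom1 int_mom2)
  finally show ?thesis .
qed

lemma stein2: "Ex a c 2 = Ex a c 0 + 2 * \<i> * c * Ex a c 2 + \<i> * a * Ex a c 1"
proof -
  have d: "((\<lambda>x. complex_of_real x * gq a c x) has_vector_derivative
      (gq a c x + complex_of_real x * ((\<i> * complex_of_real (2*c*x + a)) * gq a c x))) (at x)" for x
  proof -
    have "((\<lambda>x. complex_of_real x * gq a c x) has_vector_derivative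
      (complex_of_real x * ((\<i> * complex_of_real (2*c*x + a)) * gq a c x) + complex_of_real 1 * gq a c x)) (at x)"
      by (intro has_vector_derivative_mult dgq has_vector_derivative_of_real DERIV_ident)
    then show ?thesis by (simp add: algebra_simps)
  qed
  have eqf: "(\<lambda>x. complex_of_real (std_normal_density x) * (gq a c x + complex_of_real x * ((\<i> * complex_of_real (2*c*x + a)) * gq a c x)))
       = (\<lambda>x. (complex_of_real (std_normal_density x) * (complex_of_real x ^ 0 * gq a c x))
            + (2 * \<i> * c) * (complex_of_real (std_normal_density x) * (complex_of_real x ^ 2 * gq a c x))
            + (\<i> * a) * (complex_of_real (std_normal_density x) * (complex_of_real x ^ 1 * gq a c x)))"
    by (auto simp: fun_eq_iff algebra_simps power2_eq_square)
  have "Ex a c 2 = (\<integral>x. complex_of_real (std_normal_density x) * (complex_of_real x * (complex_of_real x * gq a c x)) \<partial>lborel)"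
    unfolding Ex_def by (simp add: power2_eq_square mult.assoc)
  also have "\<dots> = (\<integral>x. complex_of_real (std_normal_density x) * (gq a c x + complex_of_real x * ((\<i> * complex_of_real (2*c*x + a)) * gq a c x)) \<partial>lborel)"
  proof (rule stein[OF d])
    show "continuous_on UNIV (\<lambda>x. gq a c x + complex_of_real x * ((\<i> * complex_of_real (2*c*x + a)) * gq a c x))"
      using continuous_gq by (intro continuous_intros) auto
    show "integrable lborel (\<lambda>x. complex_of_real (std_normal_density x) * (complex_of_real x * (complex_of_real x * gq a c x)))"
      using int_mom[of 2] by (simp add: power2_eq_square mult.assoc)
    show "integrable lborel (\<lambda>x. complex_of_real (std_normal_density x) * (gq a c x + complex_of_real x * ((\<i> * complex_of_real (2*c*x + a)) * gq a c x)))"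
      unfolding eqf by (intro Bochner_Integration.integrable_add integrable_mult_right int_mom)
    show "((\<lambda>x. complex_of_real (std_normal_density x) * (complex_of_real x * gq a c x)) \<longlongrightarrow> 0) at_top"
      using lim0[OF limt1, of a c] by simp
    show "((\<lambda>x. complex_of_real (std_normal_density x) * (complex_of_real x * gq a c x)) \<longlongrightarrow> 0) at_bot"
      using lim0[OF limb1, of a c] by simp
  qed
  also have "\<dots> = Ex a c 0 + 2 * \<i> * c * Ex a c 2 + \<i> * a * Ex a c 1"
    unfolding eqf Ex_def
    by (simp add: Bochner_Integration.integral_add int_mom0 int_mom1 int_mom2)
  finally show ?thesis .
qed


lemma A0: "Ex a 0 0 = complex_of_real (exp (- (a^2) / 2))"
proof -
  have "char std_normal_distribution a = complex_of_real (exp (- (a^2) / 2))"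
    by (simp add: char_std_normal_distribution)
  moreover have "char std_normal_distribution a = (\<integral>x. std_normal_density x *\<^sub>R iexp (a * x) \<partial>lborel)"
    unfolding char_def by (subst integral_density) auto
  moreover have "Ex a 0 0 = (\<integral>x. std_normal_density x *\<^sub>R iexp (a * x) \<partial>lborel)"
    unfolding Ex_def gq_def by (simp add: scaleR_conv_of_real)
  ultimately show ?thesis by simp
qed

lemma ode_rel: "(1 - 2 * \<i> * complex_of_real c)^2 * Ex a c 2 = (1 - 2 * \<i> * complex_of_real c - complex_of_real a ^ 2) * Ex a c 0"
proof -
  let ?s = "1 - 2 * \<i> * complex_of_real c"
  have e1: "?s * Ex a c 1 = \<i> * a * Ex a c 0" using stein1[of a c] by (simp add: algebra_simps)
  have e2: "?s * Ex a c 2 = Ex a c 0 + \<i> * a * Ex a c 1" using stein2[of a c] by (simp add: algebra_simps)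
  have "?s^2 * Ex a c 2 = ?s * (?s * Ex a c 2)" by (simp add: power2_eq_square)
  also have "\<dots> = ?s * Ex a c 0 + \<i> * a * (?s * Ex a c 1)" unfolding e2 by (simp add: algebra_simps)
  also have "\<dots> = (?s - complex_of_real a ^ 2) * Ex a c 0" unfolding e1 by (simp add: algebra_simps power2_eq_square)
  finally show ?thesis .
qed

definition Pq :: "real \<Rightarrow> complex \<Rightarrow> complex" where
  "Pq a z = Ln (1 - 2 * \<i> * z) / 2 + complex_of_real a ^ 2 / 2 * inverse (1 - 2 * \<i> * z)"

lemma s_nz: "1 - 2 * \<i> * complex_of_real c \<noteq> 0"
proof
  assume "1 - 2 * \<i> * complex_of_real c = 0"
  then have "Re (1 - 2 * \<i> * complex_of_real c) = 0" by simp
  then show False by simp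
qed

lemma s_notin: "1 - 2 * \<i> * complex_of_real c \<notin> \<real>\<^sub>\<le>\<^sub>0"
  by (auto simp: nonpos_Reals_def complex_eq_iff)

lemma dPq: "(Pq a has_field_derivative
   (- \<i> * (1 - 2 * \<i> * complex_of_real c - complex_of_real a ^ 2) / (1 - 2 * \<i> * complex_of_real c)^2))
   (at (complex_of_real c))"
proof -
  let ?s = "1 - 2 * \<i> * complex_of_real c"
  have g: "((\<lambda>z. 1 - 2 * \<i> * z) has_field_derivative (- 2 * \<i>)) (at (complex_of_real c))"
    by (auto intro!: derivative_eq_intros)
  have l: "((\<lambda>z. Ln (1 - 2 * \<i> * z) / 2) has_field_derivative (inverse ?s * (- 2 * \<i>) / 2)) (at (complex_of_real c))"
    by (intro DERIV_cdivide DERIV_chain2[OF has_field_derivative_Ln[OF s_notin] g])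
  have iv: "((\<lambda>z. inverse (1 - 2 * \<i> * z)) has_field_derivative (- (inverse ?s * (- 2 * \<i>) * inverse ?s))) (at (complex_of_real c))"
    by (rule DERIV_inverse'[OF g s_nz])
  have r: "((\<lambda>z. complex_of_real a ^ 2 / 2 * inverse (1 - 2 * \<i> * z)) has_field_derivative
      (complex_of_real a ^ 2 / 2 * (- (inverse ?s * (- 2 * \<i>) * inverse ?s)))) (at (complex_of_real c))"
    by (rule DERIV_cmult[OF iv])
  have "(Pq a has_field_derivative (inverse ?s * (- 2 * \<i>) / 2 + complex_of_real a ^ 2 / 2 * (- (inverse ?s * (- 2 * \<i>) * inverse ?s))))
      (at (complex_of_real c))"
  proof -
    have "Pq a = (\<lambda>z. Ln (1 - 2 * \<i> * z) / 2 + complex_of_real a ^ 2 / 2 * inverse (1 - 2 * \<i> * z))"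
      by (rule ext) (simp only: Pq_def)
    then show ?thesis using DERIV_add[OF l r] by simp
  qed
  moreover have "inverse ?s * (- 2 * \<i>) / 2 + complex_of_real a ^ 2 / 2 * (- (inverse ?s * (- 2 * \<i>) * inverse ?s))
      = - \<i> * (?s - complex_of_real a ^ 2) / ?s^2"
  proof -
    define S where "S = ?s"
    have "S \<noteq> 0" unfolding S_def by (rule s_nz)
    then have "inverse S * (- 2 * \<i>) / 2 + complex_of_real a ^ 2 / 2 * (- (inverse S * (- 2 * \<i>) * inverse S))
      = - \<i> * (S - complex_of_real a ^ 2) / S^2"
      by (simp add: field_simps power2_eq_square)
    then show ?thesis unfolding S_def .
  qed
  ultimately show ?thesis by simp
qed

lemma alg1: "(A2::complex) = X * A0 / S \<Longrightarrow> A0 * (1 * (E * (- \<i> * X / S))) + \<i> * A2 * E = 0"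
  by (simp add: algebra_simps)

lemma gauss: "Ex a c 0 = exp (- Pq a (complex_of_real c))"
proof -
  define K where "K c = Ex a c 0 * exp (Pq a (complex_of_real c))" for c
  have DK: "(K has_vector_derivative 0) (at c)" for c
  proof -
    let ?s = "1 - 2 * \<i> * complex_of_real c"
    let ?P' = "- \<i> * (?s - complex_of_real a ^ 2) / ?s^2"
    have dE: "((\<lambda>c. exp (Pq a (complex_of_real c))) has_vector_derivative
        (1 * (exp (Pq a (complex_of_real c)) * ?P'))) (at c)"
    proof -
      have o: "((\<lambda>c::real. complex_of_real c) has_vector_derivative 1) (at c)"
        using has_vector_derivative_of_real[OF DERIV_ident, where F="at c"] by simp
      have g: "((\<lambda>z. exp (Pq a z)) has_field_derivative (exp (Pq a (complex_of_real c)) * ?P')) (at (complex_of_real c))"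
        by (rule DERIV_chain2[OF DERIV_exp dPq])
      show ?thesis using field_vector_diff_chain_at[OF o g] by (simp add: o_def)
    qed
    have "(K has_vector_derivative (Ex a c 0 * (1 * (exp (Pq a (complex_of_real c)) * ?P'))
          + (\<i> * Ex a c 2) * exp (Pq a (complex_of_real c)))) (at c)"
      unfolding K_def[abs_def] by (intro has_vector_derivative_mult dA dE)
    moreover have z: "Ex a c 0 * (1 * (exp (Pq a (complex_of_real c)) * ?P'))
          + (\<i> * Ex a c 2) * exp (Pq a (complex_of_real c)) = 0"
    proof -
      have "Ex a c 2 = (?s - complex_of_real a ^ 2) * Ex a c 0 / ?s^2"
        using ode_rel[of c a] s_nz[of c] by (simp add: field_simps)
      then show ?thesis by (rule alg1)
    qed
    ultimately show ?thesis by (simp only: z)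
  qed
  have "\<exists>k. \<forall>x\<in>UNIV. K x = k"
    by (rule has_derivative_zero_constant[of UNIV K]) (use DK in \<open>auto simp: has_vector_derivative_def\<close>)
  then have "K c = K 0" by auto
  also have "K 0 = 1"
    unfolding K_def A0 Pq_def by (simp add: exp_of_real[symmetric] exp_add[symmetric])
  finally have "Ex a c 0 * exp (Pq a (complex_of_real c)) = 1" unfolding K_def .
  then have "inverse (exp (Pq a (complex_of_real c))) = Ex a c 0"
    by (intro inverse_unique) (simp add: mult.commute)
  then show ?thesis by (simp add: exp_minus)
qed




lemma in_seg_real:
  assumes "z \<in> closed_segment 0 (complex_of_real c)"
  obtains t where "z = complex_of_real t" "\<bar>t\<bar> \<le> \<bar>c\<bar>"
proof -
  from assms obtain u where u: "0 \<le> u" "u \<le> 1" "z = (1 - u) *\<^sub>R 0 + u *\<^sub>R complex_of_real c"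
    unfolding closed_segment_def by auto
  then have "z = complex_of_real (u * c)" by (simp add: scaleR_conv_of_real)
  moreover have "\<bar>u * c\<bar> \<le> \<bar>c\<bar>" using u by (simp add: abs_mult mult_left_le_one_le)
  ultimately show ?thesis using that by blast
qed

lemma exp_sub1_bound: "norm (exp z - 1) \<le> norm z * exp (norm (z::complex))"
proof -
  have "norm (exp z - exp 0) \<le> exp (norm z) * norm (z - 0)"
  proof (rule field_differentiable_bound[where S="closed_segment 0 z"])
    show "convex (closed_segment 0 z)" by (rule convex_closed_segment)
    show "(exp has_field_derivative exp w) (at w within closed_segment 0 z)" for w
      by (rule has_field_derivative_at_within[OF DERIV_exp])
    show "norm (exp w) \<le> exp (norm z)" if "w \<in> closed_segment 0 z" for w
    proof -
      have "norm (w - 0) \<le> norm (z - 0)"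
        by (rule segment_bound(1)[OF that])
      then have "norm w \<le> norm z" by simp
      then have "exp (norm w) \<le> exp (norm z)" by simp
      then show ?thesis using norm_exp[of w] by linarith
    qed
    show "z \<in> closed_segment 0 z" by (rule ends_in_segment(2))
    show "0 \<in> closed_segment 0 z" by (rule ends_in_segment(1))
  qed
  then show ?thesis by (simp add: mult.commute)
qed

lemma alg2: assumes "(1 - 2 * \<i> * z) \<noteq> 0"
  shows "- \<i> - inverse (1 - 2 * \<i> * z) * (- 2 * \<i>) / 2 + 2 * z = - 4 * \<i> * z^2 / (1 - 2 * \<i> * z)"
proof -
  define S where "S = 1 - 2 * \<i> * z"
  have S: "S \<noteq> 0" using assms unfolding S_def .
  have "(- \<i> - inverse S * (- 2 * \<i>) / 2 + 2 * z) * S = (- \<i> + 2 * z) * S + \<i>"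
    using S by (simp add: algebra_simps)
  also have "\<dots> = - 4 * \<i> * z^2" unfolding S_def by (simp add: algebra_simps power2_eq_square)
  finally have "(- \<i> - inverse S * (- 2 * \<i>) / 2 + 2 * z) * S = - 4 * \<i> * z^2" .
  then have "- \<i> - inverse S * (- 2 * \<i>) / 2 + 2 * z = - 4 * \<i> * z^2 / S"
    using S by (metis nonzero_mult_div_cancel_right)
  then show ?thesis unfolding S_def .
qed

definition Fq :: "complex \<Rightarrow> complex" where
  "Fq z = - \<i> * z - Ln (1 - 2 * \<i> * z) / 2 + z^2"

lemma Fq_bound: "norm (Fq (complex_of_real c)) \<le> 4 * \<bar>c\<bar>^3"
proof -
  let ?S = "closed_segment 0 (complex_of_real c)"
  have nz: "1 - 2 * \<i> * complex_of_real t \<noteq> 0" for t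
  proof
    assume "1 - 2 * \<i> * complex_of_real t = 0"
    then have "Re (1 - 2 * \<i> * complex_of_real t) = 0" by simp
    then show False by simp
  qed
  have ni: "1 - 2 * \<i> * complex_of_real t \<notin> \<real>\<^sub>\<le>\<^sub>0" for t
    by (auto simp: nonpos_Reals_def complex_eq_iff)
  have ge1: "1 \<le> norm (1 - 2 * \<i> * complex_of_real t)" for t
  proof -
    have "\<bar>Re (1 - 2 * \<i> * complex_of_real t)\<bar> \<le> norm (1 - 2 * \<i> * complex_of_real t)"
      by (rule abs_Re_le_cmod)
    then show ?thesis by simp
  qed
  have "norm (Fq (complex_of_real c) - Fq 0) \<le> (4 * c^2) * norm (complex_of_real c - 0)"
  proof (rule field_differentiable_bound[where S="?S" and f' = "\<lambda>z. - 4 * \<i> * z^2 / (1 - 2 * \<i> * z)"])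
    show "convex ?S" by simp
    show "(Fq has_field_derivative - 4 * \<i> * z^2 / (1 - 2 * \<i> * z)) (at z within ?S)" if zS: "z \<in> ?S" for z
    proof -
      obtain t where t: "z = complex_of_real t" "\<bar>t\<bar> \<le> \<bar>c\<bar>" using in_seg_real[OF zS] by blast
      have ni': "1 - 2 * \<i> * z \<notin> \<real>\<^sub>\<le>\<^sub>0" using ni[of t] t(1) by simp
      have g: "((\<lambda>z. 1 - 2 * \<i> * z) has_field_derivative (- 2 * \<i>)) (at z)"
        by (auto intro!: derivative_eq_intros)
      have l: "((\<lambda>z. Ln (1 - 2 * \<i> * z)) has_field_derivative (inverse (1 - 2 * \<i> * z) * (- 2 * \<i>))) (at z)"
        using DERIV_chain2[OF has_field_derivative_Ln[OF ni'] g] by simp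
      have p: "((\<lambda>z. z^2) has_field_derivative 2 * z) (at z)"
        by (auto intro!: derivative_eq_intros)
      have d: "(Fq has_field_derivative (- \<i> - inverse (1 - 2 * \<i> * z) * (- 2 * \<i>) / 2 + 2 * z)) (at z)"
      proof -
        have "Fq = (\<lambda>z. - \<i> * z - Ln (1 - 2 * \<i> * z) / 2 + z^2)"
          by (rule ext) (simp only: Fq_def)
        moreover have "((\<lambda>z. - \<i> * z - Ln (1 - 2 * \<i> * z) / 2 + z^2) has_field_derivative
            (- \<i> * 1 - inverse (1 - 2 * \<i> * z) * (- 2 * \<i>) / 2 + 2 * z)) (at z)"
          by (intro DERIV_add DERIV_diff DERIV_cmult DERIV_cdivide l DERIV_ident p)
        ultimately show ?thesis by simp
      qed
      have "- \<i> - inverse (1 - 2 * \<i> * z) * (- 2 * \<i>) / 2 + 2 * z = - 4 * \<i> * z^2 / (1 - 2 * \<i> * z)"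
        by (rule alg2) (use nz t(1) in simp)
      then show ?thesis using has_field_derivative_at_within[OF d] by simp
    qed
    show "norm (- 4 * \<i> * z^2 / (1 - 2 * \<i> * z)) \<le> 4 * c^2" if zS: "z \<in> ?S" for z
    proof -
      obtain t where t: "z = complex_of_real t" "\<bar>t\<bar> \<le> \<bar>c\<bar>" using in_seg_real[OF zS] by blast
      have "norm (- 4 * \<i> * z^2 / (1 - 2 * \<i> * z)) = 4 * t^2 / norm (1 - 2 * \<i> * complex_of_real t)"
        using t by (simp add: norm_divide norm_mult norm_power)
      also have "\<dots> \<le> 4 * t^2" using ge1[of t] by (simp add: divide_le_eq mult_le_cancel_left1 mult_left_le)
      also have "\<dots> \<le> 4 * c^2" using t(2) by (simp add: abs_le_square_iff)
      finally show ?thesis .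
    qed
  qed auto
  moreover have "Fq 0 = 0" by (simp add: Fq_def)
  ultimately show ?thesis by (simp add: power3_eq_cube power2_eq_square abs_mult mult.assoc)
qed




lemma alpha_eq:
  fixes N :: nat and w2 w3 :: real
  assumes "N \<ge> 1"
  shows "real N * (4 * \<bar>w3 / sqrt (2 * real N)\<bar>^3 + (w2 / sqrt (real N))^2 * \<bar>w3 / sqrt (2 * real N)\<bar>)
       = \<bar>w3\<bar> * sqrt (2 / real N) * (w2^2 / 2 + w3^2)"
proof -
  define r where "r = sqrt (real N)"
  define q where "q = sqrt (2::real)"
  have r: "r > 0" unfolding r_def using assms by simp
  have q: "q > 0" "q^2 = 2" unfolding q_def by simp_all
  have N: "real N = r^2" unfolding r_def by simp
  have s1: "sqrt (2 * real N) = q * r" unfolding q_def r_def by (simp add: real_sqrt_mult)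
  have s2: "sqrt (2 / real N) = q / r" unfolding q_def r_def by (simp add: real_sqrt_divide)
  have q3: "4 / q^3 = q" using q by (simp add: power3_eq_cube field_simps power2_eq_square)
  have q1: "1 / q = q / 2" using q by (simp add: field_simps power2_eq_square)
  have "real N * (4 * \<bar>w3 / sqrt (2 * real N)\<bar>^3 + (w2 / sqrt (real N))^2 * \<bar>w3 / sqrt (2 * real N)\<bar>)
      = (4 / q^3) * (\<bar>w3\<bar>^3 / r) + (1 / q) * (w2^2 * \<bar>w3\<bar> / r)"
    unfolding s1 r_def[symmetric] unfolding N using r q
    by (simp add: abs_mult power_divide field_simps power2_eq_square power3_eq_cube)
  also have "\<dots> = \<bar>w3\<bar> * sqrt (2 / real N) * (w2^2 / 2 + w3^2)"
    unfolding q3 q1 s2 using r by (simp add: field_simps power3_eq_cube power2_eq_square)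
  finally show ?thesis .
qed


lemma final_ineq:
  fixes N :: nat and w1 w2 w3 :: real
  assumes N1: "N \<ge> 1"
  defines "a \<equiv> w2 / sqrt (real N)" and "c \<equiv> w3 / sqrt (2 * real N)" and "t \<equiv> w1 / sqrt (real N + 1)"
  shows "cmod (exp (- \<i> * complex_of_real c - Pq a (complex_of_real c)) ^ N * complex_of_real (exp (- (t^2) / 2)) ^ (N + 1)
            - complex_of_real (exp (- (w1^2 + w2^2 + w3^2) / 2)))
         \<le> eps_bound N w1 w2 w3 * exp (- (w1^2 + w2^2 + w3^2) / 2)"
proof -
  define X where "X = - (w1^2 + w2^2 + w3^2) / 2"
  define L where "L = - \<i> * complex_of_real c - Pq a (complex_of_real c)"
  define s where "s = 1 - 2 * \<i> * complex_of_real c"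
  define D where "D = of_nat N * L + complex_of_real ((w2^2 + w3^2) / 2)"
  define \<alpha> where "\<alpha> = \<bar>w3\<bar> * sqrt (2 / real N) * (w2^2 / 2 + w3^2)"
  have hN: "real N > 0" using N1 by simp
  have t2: "(real N + 1) * t^2 = w1^2"
    unfolding t_def using hN by (simp add: power_divide)
  have a2: "real N * a^2 = w2^2"
    unfolding a_def using hN by (simp add: power_divide)
  have c2: "2 * real N * c^2 = w3^2"
    unfolding c_def using hN by (simp add: power_divide)
  have e1: "complex_of_real (exp (- (t^2) / 2)) ^ (N + 1) = complex_of_real (exp (- (w1^2) / 2))"
  proof -
    have "exp (- (t^2) / 2) ^ (N + 1) = exp (real (N + 1) * (- (t^2) / 2))"
      by (rule exp_of_nat_mult[symmetric])
    also have "real (N + 1) * (- (t^2) / 2) = - (w1^2) / 2" using t2 by (simp add: add.commute)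
    finally show ?thesis by (metis of_real_power)
  qed
  have e2: "exp L ^ N = exp (of_nat N * L)" by (rule exp_of_nat_mult[symmetric])
  have main_eq: "exp L ^ N * complex_of_real (exp (- (t^2) / 2)) ^ (N + 1) - complex_of_real (exp X)
      = complex_of_real (exp X) * (exp D - 1)"
  proof -
    have "complex_of_real (exp X) * exp D = exp (complex_of_real X + D)"
      by (simp add: exp_add exp_of_real)
    also have "complex_of_real X + D = of_nat N * L + complex_of_real (- (w1^2) / 2)"
      unfolding X_def D_def by (simp add: field_simps)
    also have "exp \<dots> = exp L ^ N * complex_of_real (exp (- (w1^2) / 2))"
      by (simp only: exp_add exp_of_real e2)
    finally show ?thesis unfolding e1 by (simp add: algebra_simps)
  qed
  have s_ne: "s \<noteq> 0" unfolding s_def by (rule s_nz)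
  have s_ge: "1 \<le> norm s"
  proof -
    have "\<bar>Re s\<bar> \<le> norm s" by (rule abs_Re_le_cmod)
    then show ?thesis unfolding s_def by simp
  qed
  have D_eq: "D = of_nat N * (Fq (complex_of_real c) + complex_of_real a ^ 2 / 2 * (1 - inverse s))"
  proof -
    have r: "(w2^2 + w3^2) / 2 = real N * (a^2 / 2 + c^2)" using a2 c2 by (simp add: field_simps)
    show ?thesis
      unfolding D_def L_def Fq_def Pq_def s_def r
      by (simp add: algebra_simps)
  qed
  have n1: "norm (1 - inverse s) \<le> 2 * \<bar>c\<bar>"
  proof -
    have "1 - inverse s = (s - 1) / s" using s_ne by (simp add: field_simps)
    then have "norm (1 - inverse s) = 2 * \<bar>c\<bar> / norm s"
      unfolding s_def by (simp add: norm_divide norm_mult)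
    also have "\<dots> \<le> 2 * \<bar>c\<bar>" using s_ge by (simp add: divide_le_eq mult_le_cancel_left1 mult_left_le)
    finally show ?thesis .
  qed
  have Dle: "norm D \<le> \<alpha>"
  proof -
    have "norm (Fq (complex_of_real c) + complex_of_real a ^ 2 / 2 * (1 - inverse s))
        \<le> norm (Fq (complex_of_real c)) + norm (complex_of_real a ^ 2 / 2 * (1 - inverse s))"
      by (rule norm_triangle_ineq)
    also have "\<dots> \<le> 4 * \<bar>c\<bar>^3 + a^2 * \<bar>c\<bar>"
    proof (rule add_mono[OF Fq_bound])
      have "norm (complex_of_real a ^ 2 / 2 * (1 - inverse s)) = a^2 / 2 * norm (1 - inverse s)"
        by (simp add: norm_mult norm_divide norm_power)
      also have "\<dots> \<le> a^2 / 2 * (2 * \<bar>c\<bar>)" by (rule mult_left_mono[OF n1]) simp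
      finally show "norm (complex_of_real a ^ 2 / 2 * (1 - inverse s)) \<le> a^2 * \<bar>c\<bar>" by simp
    qed
    finally have "norm D \<le> real N * (4 * \<bar>c\<bar>^3 + a^2 * \<bar>c\<bar>)"
      unfolding D_eq norm_mult by (simp add: mult_left_mono)
    also have "\<dots> = \<alpha>" unfolding \<alpha>_def a_def c_def using alpha_eq[OF N1] by simp
    finally show ?thesis .
  qed
  have "cmod (exp L ^ N * complex_of_real (exp (- (t^2) / 2)) ^ (N + 1) - complex_of_real (exp X))
      = exp X * norm (exp D - 1)"
    unfolding main_eq by (simp add: norm_mult)
  also have "\<dots> \<le> exp X * (norm D * exp (norm D))"
    by (rule mult_left_mono[OF exp_sub1_bound]) simp
  also have "\<dots> \<le> exp X * (\<alpha> * exp \<alpha>)"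
  proof -
    have a0: "0 \<le> \<alpha>" using Dle norm_ge_zero[of D] by linarith
    show ?thesis using Dle a0 by (intro mult_left_mono[OF mult_mono]) auto
  qed
  also have "\<dots> = eps_bound N w1 w2 w3 * exp X"
    unfolding eps_bound_def \<alpha>_def Let_def by simp
  finally show ?thesis unfolding X_def L_def .
qed


lemma sum_split_2N:
  fixes N :: nat and f :: "nat \<Rightarrow> 'b::comm_monoid_add"
  shows "(\<Sum>i\<in>{1..2*N+1}. f i) = (\<Sum>i\<in>{1..N}. f i) + (\<Sum>i\<in>{N+1..2*N+1}. f i)"
proof -
  have "{1..2*N+1} = {1..N} \<union> {N+1..2*N+1}" by auto
  then show ?thesis by (simp add: sum.union_disjoint)
qed

lemma prod_split_2N:
  fixes N :: nat and f :: "nat \<Rightarrow> 'b::comm_monoid_mult"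
  shows "(\<Prod>i\<in>{1..2*N+1}. f i) = (\<Prod>i\<in>{1..N}. f i) * (\<Prod>i\<in>{N+1..2*N+1}. f i)"
proof -
  have "{1..2*N+1} = {1..N} \<union> {N+1..2*N+1}" by auto
  then show ?thesis by (simp add: prod.union_disjoint)
qed

lemma shift_Zhat: fixes N :: nat and g :: "nat \<Rightarrow> real" shows "(\<Sum>i=1..N+1. g (N+i)) = (\<Sum>i\<in>{N+1..2*N+1}. (g i :: real))"
proof -
  have "(\<Sum>i\<in>{N+1..2*N+1}. g i) = (\<Sum>i\<in>{1+N..(N+1)+N}. g i)"
    by (intro sum.cong refl) auto
  also have "\<dots> = (\<Sum>i=1..N+1. g (i+N))" by (rule sum.shift_bounds_cl_nat_ivl)
  finally show ?thesis by (simp add: add.commute)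
qed

theorem mainTheorem20:
  fixes M :: "'a measure" and Z :: "nat \<Rightarrow> 'a \<Rightarrow> real" and N :: nat
    and w1 w2 w3 :: real
  assumes "prob_space M"
    and "N \<ge> 1"
    and "prob_space.indep_vars M (\<lambda>_. borel) Z {1..2*N+1}"
    and "\<And>i. i \<in> {1..2*N+1} \<Longrightarrow> distributed M lborel (Z i) std_normal_density"
  shows "cmod ((\<integral>x. cis (w1 * Zhat N Z x + w2 * Zcheck N Z x + w3 * Ztilde N Z x) \<partial>M)
              - complex_of_real (exp (- (w1^2 + w2^2 + w3^2) / 2)))
         \<le> eps_bound N w1 w2 w3 * exp (- (w1^2 + w2^2 + w3^2) / 2)"
proof -
  interpret P: prob_space M by fact
  define a where "a = w2 / sqrt (real N)"
  define c where "c = w3 / sqrt (2 * real N)"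
  define t where "t = w1 / sqrt (real N + 1)"
  define \<theta> where "\<theta> i y = (if i \<le> N then a * y + c * (y^2 - 1) else t * y)" for i y
  define Y where "Y i y = (if i \<le> N then gq a c y * exp (- \<i> * complex_of_real c) else gq t 0 y)" for i y
  let ?I = "{1..2*N+1}"
  have Ymeas[measurable]: "Y i \<in> borel_measurable borel" for i
    unfolding Y_def by (cases "i \<le> N") simp_all
  have Ynorm: "norm (Y i y) = 1" for i y
    unfolding Y_def by (simp add: norm_mult)
  have Yexp: "Y i y = exp (\<i> * complex_of_real (\<theta> i y))" for i y
    unfolding Y_def \<theta>_def gq_def
    by (cases "i \<le> N") (simp_all add: exp_add[symmetric] algebra_simps)
  have Zmeas: "Z i \<in> measurable M borel" if "i \<in> ?I" for i
    using distributed_measurable[OF assms(4)[OF that]] by simp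
  have lin: "w1 * Zhat N Z x + w2 * Zcheck N Z x + w3 * Ztilde N Z x = (\<Sum>i\<in>?I. \<theta> i (Z i x))" for x
  proof -
    have s2: "sqrt (2 * real N) = sqrt 2 * sqrt (real N)" by (simp add: real_sqrt_mult)
    have h1: "w1 * Zhat N Z x = (\<Sum>i\<in>{N+1..2*N+1}. \<theta> i (Z i x))"
    proof -
      have "w1 * Zhat N Z x = (\<Sum>i\<in>{N+1..2*N+1}. t * Z i x)"
        unfolding Zhat_def t_def shift_Zhat[where N=N and g="\<lambda>i. Z i x"]
        by (simp add: sum_distrib_left sum_divide_distrib add_divide_distrib distrib_left)
      also have "\<dots> = (\<Sum>i\<in>{N+1..2*N+1}. \<theta> i (Z i x))"
        by (intro sum.cong refl) (auto simp: \<theta>_def)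
      finally show ?thesis .
    qed
    have h2: "w2 * Zcheck N Z x + w3 * Ztilde N Z x = (\<Sum>i\<in>{1..N}. \<theta> i (Z i x))"
    proof -
      have "w2 * Zcheck N Z x + w3 * Ztilde N Z x = (\<Sum>i\<in>{1..N}. w2 * Z i x / sqrt N) + (\<Sum>i\<in>{1..N}. w3 * (((Z i x)^2 - 1) / sqrt 2) / sqrt N)"
        unfolding Zcheck_def Ztilde_def by (simp only: sum_distrib_left sum_divide_distrib times_divide_eq_right)
      also have "\<dots> = (\<Sum>i\<in>{1..N}. w2 * Z i x / sqrt N + w3 * (((Z i x)^2 - 1) / sqrt 2) / sqrt N)"
        by (simp only: sum.distrib)
      also have "\<dots> = (\<Sum>i\<in>{1..N}. a * Z i x + c * ((Z i x)^2 - 1))"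
        by (intro sum.cong refl) (simp add: a_def c_def s2 real_sqrt_mult field_simps)
      also have "\<dots> = (\<Sum>i\<in>{1..N}. \<theta> i (Z i x))"
        by (intro sum.cong refl) (auto simp: \<theta>_def)
      finally show ?thesis .
    qed
    show ?thesis unfolding sum_split_2N[where N=N] using h1 h2 by simp
  qed
  have pw: "cis (w1 * Zhat N Z x + w2 * Zcheck N Z x + w3 * Ztilde N Z x) = (\<Prod>i\<in>?I. Y i (Z i x))" for x
    unfolding lin cis_conv_exp Yexp of_real_sum sum_distrib_left
    by (rule exp_sum) simp
  have indep: "P.indep_vars (\<lambda>_. borel) (\<lambda>i x. Y i (Z i x)) ?I"
    by (rule P.indep_vars_compose2[OF assms(3)]) simp
  have intY: "integrable M (\<lambda>x. Y i (Z i x))" if "i \<in> ?I" for i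
    by (rule P.integrable_const_bound[where B=1]) (use Zmeas[OF that] Ynorm in auto)
  have EY: "(\<integral>x. Y i (Z i x) \<partial>M) = (\<integral>x. std_normal_density x *\<^sub>R Y i x \<partial>lborel)" if "i \<in> ?I" for i
  proof -
    have "(\<integral>x. Y i (Z i x) \<partial>M) = integral\<^sup>L (distr M lborel (Z i)) (Y i)"
      by (rule integral_distr[symmetric]) (use distributed_measurable[OF assms(4)[OF that]] in auto)
    also have "\<dots> = integral\<^sup>L (density lborel std_normal_density) (Y i)"
      unfolding distributed_distr_eq_density[OF assms(4)[OF that]] ..
    also have "\<dots> = (\<integral>x. std_normal_density x *\<^sub>R Y i x \<partial>lborel)"
      by (subst integral_density) auto
    finally show ?thesis .
  qed
  have E1: "(\<integral>x. Y i (Z i x) \<partial>M) = exp (- \<i> * complex_of_real c - Pq a (complex_of_real c))"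
    if "i \<in> {1..N}" for i
  proof -
    have iI: "i \<in> ?I" using that by auto
    have "(\<integral>x. std_normal_density x *\<^sub>R Y i x \<partial>lborel)
        = (\<integral>x. exp (- \<i> * complex_of_real c) * (complex_of_real (std_normal_density x) * (complex_of_real x ^ 0 * gq a c x)) \<partial>lborel)"
      using that by (intro Bochner_Integration.integral_cong refl) (simp add: Y_def scaleR_conv_of_real)
    also have "\<dots> = exp (- \<i> * complex_of_real c) * Ex a c 0"
      unfolding Ex_def by simp
    also have "\<dots> = exp (- \<i> * complex_of_real c - Pq a (complex_of_real c))"
      unfolding gauss by (simp add: exp_diff exp_minus field_simps)
    finally show ?thesis using EY[OF iI] by simp
  qed
  have E2: "(\<integral>x. Y i (Z i x) \<partial>M) = complex_of_real (exp (- (t^2) / 2))"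
    if "i \<in> {N+1..2*N+1}" for i
  proof -
    have iI: "i \<in> ?I" using that by auto
    have "(\<integral>x. std_normal_density x *\<^sub>R Y i x \<partial>lborel) = Ex t 0 0"
      unfolding Ex_def
      using that by (intro Bochner_Integration.integral_cong refl) (simp add: Y_def scaleR_conv_of_real)
    also have "\<dots> = complex_of_real (exp (- (t^2) / 2))" by (rule A0)
    finally show ?thesis using EY[OF iI] by simp
  qed
  have "(\<integral>x. cis (w1 * Zhat N Z x + w2 * Zcheck N Z x + w3 * Ztilde N Z x) \<partial>M)
      = (\<integral>x. (\<Prod>i\<in>?I. Y i (Z i x)) \<partial>M)"
    unfolding pw ..
  also have "\<dots> = (\<Prod>i\<in>?I. \<integral>x. Y i (Z i x) \<partial>M)"
    by (rule P.indep_vars_lebesgue_integral[OF _ indep intY]) auto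
  also have "\<dots> = exp (- \<i> * complex_of_real c - Pq a (complex_of_real c)) ^ N * complex_of_real (exp (- (t^2) / 2)) ^ (N + 1)"
    unfolding prod_split_2N[where N=N]
    by (simp add: E1 E2 prod.cong[OF refl E1] prod.cong[OF refl E2])
  finally have eq: "(\<integral>x. cis (w1 * Zhat N Z x + w2 * Zcheck N Z x + w3 * Ztilde N Z x) \<partial>M)
      = exp (- \<i> * complex_of_real c - Pq a (complex_of_real c)) ^ N * complex_of_real (exp (- (t^2) / 2)) ^ (N + 1)" .
  show ?thesis
    unfolding eq a_def c_def t_def by (rule final_ineq[OF assms(2)])
qed

end
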